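(* Let $\Lambda_1,\Lambda_2,\Gamma$ be $k$-graphs and for $i=1,2$ let $\phi_i:\Gamma\to\Lambda_i$ be an injective $k$-graph morphism such that either $\phi_i(\Gamma)$ is hereditary in $\Lambda_i$ for both $i=1,2$, or $\phi_i(\Gamma)$ is co-hereditary in $\Lambda_i$ for both $i=1,2$. Let $\sim_\phi$ be the smallest equivalence relation on the disjoint union $\Lambda_1\sqcup\Lambda_2$ such that $\phi_1(\gamma)\sim_\phi\phi_2(\gamma)$ for all $\gamma\in\Gamma$. Then $\sim_\phi$ satisfies the following four properties (and hence $(\Lambda_1\sqcup\Lambda_2)/{\sim_\phi}$ is a $k$-graph with the induced structure maps): (1) if $\mu \sim_\phi \nu$ then $d(\mu) = d(\nu)$; (2) if $\alpha \sim_\phi \alpha'$, $\beta \sim_\phi \beta'$, $r(\beta) = s(\alpha)$ and $r(\beta') = s(\alpha')$, then $\alpha\beta \sim_\phi \alpha'\beta'$; (3) if $\alpha\beta \sim_\phi \alpha'\beta'$ and $d(\alpha) = d(\alpha')$, then $\alpha \sim_\phi \alpha'$ and $\beta \sim_\phi \beta'$; (4) if $s(\alpha) \sim_\phi r(\beta)$, then there exist $\alpha'\sim_\phi\alpha$ and $\beta'\sim_\phi\beta$ with $s(\alpha') = r(\beta')$.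
   Context: A $k$-graph is a countable small category $\Lambda$ with a functor $d:\Lambda\to\mathbb{N}^k$ such that, writing $\Lambda^n=d^{-1}(n)$, for all $m,n\in\mathbb{N}^k$ composition is a bijection from $\{(\mu,\nu)\in\Lambda^m\times\Lambda^n: s(\mu)=r(\nu)\}$ onto $\Lambda^{m+n}$; vertices $\Lambda^0$ are identified with identity morphisms, and $r,s$ are range and source maps. A $k$-graph morphism is a degree-preserving functor. The disjoint union of two $k$-graphs is a $k$-graph in the obvious way. For $v\in\Lambda^0$ and $X\subseteq\Lambda$ write $vX=\{\lambda\in X: r(\lambda)=v\}$, $Xv=\{\lambda\in X:s(\lambda)=v\}$, and for $V\subseteq\Lambda^0$, $V\Lambda=r^{-1}(V)$, $\Lambda V=s^{-1}(V)$. A subgraph $\Gamma'\subseteq\Lambda$ is hereditary if $\Gamma'=\Gamma'^0\Lambda$ and co-hereditary if $\Gamma'=\Lambda\Gamma'^0$. *)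

theory Defs
  imports Main "HOL-Library.Countable_Set"
begin

text \<open>A k-graph presented as a small category whose morphisms form the set Mor,
  with identity morphisms playing the role of vertices, range/source maps,
  a (partial) composition (only meaningful on composable pairs) and a degree
  functor into N^k, where N^k is represented as functions 'k => nat for a
  finite (nonempty) index type 'k with pointwise addition.\<close>

record ('a, 'k) kgraph =
  Mor :: "'a set"
  rng :: "'a \<Rightarrow> 'a"
  src :: "'a \<Rightarrow> 'a"
  comp :: "'a \<Rightarrow> 'a \<Rightarrow> 'a"
  deg :: "'a \<Rightarrow> 'k \<Rightarrow> nat"

definition deg_add :: "('k \<Rightarrow> nat) \<Rightarrow> ('k \<Rightarrow> nat) \<Rightarrow> ('k \<Rightarrow> nat)" where
  "deg_add m n = (\<lambda>i. m i + n i)"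

definition deg_zero :: "'k \<Rightarrow> nat" where
  "deg_zero = (\<lambda>i. 0)"

definition Obj :: "('a, 'k) kgraph \<Rightarrow> 'a set" where
  "Obj L = {v \<in> Mor L. rng L v = v \<and> src L v = v}"

definition is_kgraph :: "('a, 'k::finite) kgraph \<Rightarrow> bool" where
  "is_kgraph L \<longleftrightarrow>
     countable (Mor L) \<and>
     (\<forall>\<mu>\<in>Mor L. rng L \<mu> \<in> Obj L \<and> src L \<mu> \<in> Obj L) \<and>
     (\<forall>\<mu>\<in>Mor L. \<forall>\<nu>\<in>Mor L. src L \<mu> = rng L \<nu> \<longrightarrow>
        comp L \<mu> \<nu> \<in> Mor L \<and> rng L (comp L \<mu> \<nu>) = rng L \<mu> \<and>
        src L (comp L \<mu> \<nu>) = src L \<nu>) \<and>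
     (\<forall>\<mu>\<in>Mor L. \<forall>\<nu>\<in>Mor L. \<forall>\<rho>\<in>Mor L. src L \<mu> = rng L \<nu> \<longrightarrow> src L \<nu> = rng L \<rho> \<longrightarrow>
        comp L (comp L \<mu> \<nu>) \<rho> = comp L \<mu> (comp L \<nu> \<rho>)) \<and>
     (\<forall>\<mu>\<in>Mor L. comp L (rng L \<mu>) \<mu> = \<mu> \<and> comp L \<mu> (src L \<mu>) = \<mu>) \<and>
     (\<forall>v\<in>Obj L. deg L v = deg_zero) \<and>
     (\<forall>\<mu>\<in>Mor L. \<forall>\<nu>\<in>Mor L. src L \<mu> = rng L \<nu> \<longrightarrow>
        deg L (comp L \<mu> \<nu>) = deg_add (deg L \<mu>) (deg L \<nu>)) \<and>
     (\<forall>m n. \<forall>l\<in>Mor L. deg L l = deg_add m n \<longrightarrow>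
        (\<exists>!p. fst p \<in> Mor L \<and> snd p \<in> Mor L \<and> deg L (fst p) = m \<and> deg L (snd p) = n \<and>
              src L (fst p) = rng L (snd p) \<and> comp L (fst p) (snd p) = l))"

definition is_kgraph_morphism ::
  "('c, 'k) kgraph \<Rightarrow> ('a, 'k) kgraph \<Rightarrow> ('c \<Rightarrow> 'a) \<Rightarrow> bool" where
  "is_kgraph_morphism G L f \<longleftrightarrow>
     (\<forall>\<gamma>\<in>Mor G. f \<gamma> \<in> Mor L \<and> deg L (f \<gamma>) = deg G \<gamma> \<and>
        rng L (f \<gamma>) = f (rng G \<gamma>) \<and> src L (f \<gamma>) = f (src G \<gamma>)) \<and>
     (\<forall>\<mu>\<in>Mor G. \<forall>\<nu>\<in>Mor G. src G \<mu> = rng G \<nu> \<longrightarrow>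
        f (comp G \<mu> \<nu>) = comp L (f \<mu>) (f \<nu>))"

definition hereditary :: "('a, 'k) kgraph \<Rightarrow> 'a set \<Rightarrow> bool" where
  "hereditary L S \<longleftrightarrow> S = {l \<in> Mor L. rng L l \<in> S \<inter> Obj L}"

definition cohereditary :: "('a, 'k) kgraph \<Rightarrow> 'a set \<Rightarrow> bool" where
  "cohereditary L S \<longleftrightarrow> S = {l \<in> Mor L. src L l \<in> S \<inter> Obj L}"

definition kg_union :: "('a, 'k) kgraph \<Rightarrow> ('b, 'k) kgraph \<Rightarrow> ('a + 'b, 'k) kgraph" where
  "kg_union L1 L2 =
    \<lparr> Mor = Inl ` Mor L1 \<union> Inr ` Mor L2,
      rng = case_sum (\<lambda>x. Inl (rng L1 x)) (\<lambda>y. Inr (rng L2 y)),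
      src = case_sum (\<lambda>x. Inl (src L1 x)) (\<lambda>y. Inr (src L2 y)),
      comp = (\<lambda>p q. case (p, q) of
                 (Inl x, Inl x') \<Rightarrow> Inl (comp L1 x x')
               | (Inr y, Inr y') \<Rightarrow> Inr (comp L2 y y')
               | _ \<Rightarrow> undefined),
      deg = case_sum (deg L1) (deg L2) \<rparr>"

definition equiv_closure_on :: "'a set \<Rightarrow> ('a \<times> 'a) set \<Rightarrow> ('a \<times> 'a) set" where
  "equiv_closure_on A R = \<Inter> {E. equiv A E \<and> R \<subseteq> E}"

definition sim_phi ::
  "('a, 'k) kgraph \<Rightarrow> ('b, 'k) kgraph \<Rightarrow> ('c, 'k) kgraph \<Rightarrow> ('c \<Rightarrow> 'a) \<Rightarrow> ('c \<Rightarrow> 'b)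
    \<Rightarrow> (('a + 'b) \<times> ('a + 'b)) set" where
  "sim_phi L1 L2 G f1 f2 =
     equiv_closure_on (Mor (kg_union L1 L2)) {(Inl (f1 \<gamma>), Inr (f2 \<gamma>)) | \<gamma>. \<gamma> \<in> Mor G}"

end

theory Submission
  imports Defs
begin

lemma kg_unique:
  assumes K: "is_kgraph L" and m: "a \<in> Mor L" "b \<in> Mor L" "a' \<in> Mor L" "b' \<in> Mor L"
    and c: "src L a = rng L b" "src L a' = rng L b'"
    and e: "comp L a b = comp L a' b'" and d: "deg L a = deg L a'"
  shows "a = a' \<and> b = b'"
proof -
  have D: "\<forall>\<mu>\<in>Mor L. \<forall>\<nu>\<in>Mor L. src L \<mu> = rng L \<nu> \<longrightarrow>
        deg L (comp L \<mu> \<nu>) = deg_add (deg L \<mu>) (deg L \<nu>)"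
   and Un: "\<forall>m n. \<forall>l\<in>Mor L. deg L l = deg_add m n \<longrightarrow>
        (\<exists>!p. fst p \<in> Mor L \<and> snd p \<in> Mor L \<and> deg L (fst p) = m \<and> deg L (snd p) = n \<and>
              src L (fst p) = rng L (snd p) \<and> comp L (fst p) (snd p) = l)"
   and C: "\<forall>\<mu>\<in>Mor L. \<forall>\<nu>\<in>Mor L. src L \<mu> = rng L \<nu> \<longrightarrow>
        comp L \<mu> \<nu> \<in> Mor L \<and> rng L (comp L \<mu> \<nu>) = rng L \<mu> \<and>
        src L (comp L \<mu> \<nu>) = src L \<nu>"
    using K unfolding is_kgraph_def by blast+
  have d1: "deg L (comp L a b) = deg_add (deg L a) (deg L b)" using D m c by blast
  have d2: "deg L (comp L a' b') = deg_add (deg L a') (deg L b')" using D m c by blast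
  have "deg_add (deg L a) (deg L b) = deg_add (deg L a') (deg L b')"
    using d1 d2 e by simp
  hence "\<And>i. deg L a i + deg L b i = deg L a' i + deg L b' i" unfolding deg_add_def by metis
  hence db: "deg L b = deg L b'" using d by auto
  have lm: "comp L a b \<in> Mor L" using C m c by blast
  have dl: "deg L (comp L a b) = deg_add (deg L a) (deg L b)" using D m c by blast
  from Un lm dl have "\<exists>!p. fst p \<in> Mor L \<and> snd p \<in> Mor L \<and> deg L (fst p) = deg L a \<and> deg L (snd p) = deg L b \<and>
              src L (fst p) = rng L (snd p) \<and> comp L (fst p) (snd p) = comp L a b" by blast
  hence "\<And>q q'. fst q \<in> Mor L \<and> snd q \<in> Mor L \<and> deg L (fst q) = deg L a \<and> deg L (snd q) = deg L b \<and>
              src L (fst q) = rng L (snd q) \<and> comp L (fst q) (snd q) = comp L a b \<Longrightarrow>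
    fst q' \<in> Mor L \<and> snd q' \<in> Mor L \<and> deg L (fst q') = deg L a \<and> deg L (snd q') = deg L b \<and>
              src L (fst q') = rng L (snd q') \<and> comp L (fst q') (snd q') = comp L a b \<Longrightarrow> q = q'"
    by (metis (no_types, lifting))
  from this[of "(a,b)" "(a',b')"] have "(a, b) = (a', b')" using m c e d db by simp
  thus ?thesis by simp
qed

lemma kg_decomp:
  assumes K: "is_kgraph L" and KG: "is_kgraph G" and M: "is_kgraph_morphism G L f"
    and I: "inj_on f (Mor G)"
    and H: "hereditary L (f ` Mor G) \<or> cohereditary L (f ` Mor G)"
    and m: "a \<in> Mor L" "b \<in> Mor L" "src L a = rng L b" and g: "\<gamma> \<in> Mor G"
    and e: "comp L a b = f \<gamma>"
  shows "\<exists>ga\<in>Mor G. \<exists>gb\<in>Mor G. a = f ga \<and> b = f gb \<and> src G ga = rng G gb \<and> \<gamma> = comp G ga gb"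
proof -
  have Ob: "\<forall>\<mu>\<in>Mor L. rng L \<mu> \<in> Obj L \<and> src L \<mu> \<in> Obj L"
   and C: "\<forall>\<mu>\<in>Mor L. \<forall>\<nu>\<in>Mor L. src L \<mu> = rng L \<nu> \<longrightarrow>
        comp L \<mu> \<nu> \<in> Mor L \<and> rng L (comp L \<mu> \<nu>) = rng L \<mu> \<and>
        src L (comp L \<mu> \<nu>) = src L \<nu>"
    using K unfolding is_kgraph_def by blast+
  have ObG: "\<forall>\<mu>\<in>Mor G. rng G \<mu> \<in> Obj G \<and> src G \<mu> \<in> Obj G"
   and CG: "\<forall>\<mu>\<in>Mor G. \<forall>\<nu>\<in>Mor G. src G \<mu> = rng G \<nu> \<longrightarrow>
        comp G \<mu> \<nu> \<in> Mor G \<and> rng G (comp G \<mu> \<nu>) = rng G \<mu> \<and>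
        src G (comp G \<mu> \<nu>) = src G \<nu>"
    using KG unfolding is_kgraph_def by blast+
  have Mf: "\<forall>\<gamma>\<in>Mor G. f \<gamma> \<in> Mor L \<and> deg L (f \<gamma>) = deg G \<gamma> \<and>
        rng L (f \<gamma>) = f (rng G \<gamma>) \<and> src L (f \<gamma>) = f (src G \<gamma>)"
   and Mc: "\<forall>\<mu>\<in>Mor G. \<forall>\<nu>\<in>Mor G. src G \<mu> = rng G \<nu> \<longrightarrow>
        f (comp G \<mu> \<nu>) = comp L (f \<mu>) (f \<nu>)"
    using M unfolding is_kgraph_morphism_def by blast+
  have ObGM: "\<forall>\<mu>\<in>Mor G. rng G \<mu> \<in> Mor G \<and> src G \<mu> \<in> Mor G" using ObG unfolding Obj_def by blast
  have "a \<in> f ` Mor G \<and> b \<in> f ` Mor G"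
  proof (cases "hereditary L (f ` Mor G)")
    case True
    hence S: "f ` Mor G = {l \<in> Mor L. rng L l \<in> f ` Mor G \<inter> Obj L}" unfolding hereditary_def .
    have "rng L (f \<gamma>) \<in> f ` Mor G" using S g by blast
    moreover have "rng L (comp L a b) = rng L a" using C m by blast
    ultimately have "rng L a \<in> f ` Mor G" using e by simp
    hence a: "a \<in> f ` Mor G" using S m Ob by blast
    then obtain ga where ga: "ga \<in> Mor G" "a = f ga" by blast
    have "src L a = f (src G ga)" using Mf ga by blast
    hence "rng L b = f (src G ga)" using m(3) by simp
    hence "rng L b \<in> f ` Mor G" using ObGM ga by blast
    hence "b \<in> f ` Mor G" using S m Ob by blast
    with a show ?thesis by blast
  next
    case False
    hence S: "f ` Mor G = {l \<in> Mor L. src L l \<in> f ` Mor G \<inter> Obj L}" using H unfolding cohereditary_def by blast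
    have "src L (f \<gamma>) \<in> f ` Mor G" using S g by blast
    moreover have "src L (comp L a b) = src L b" using C m by blast
    ultimately have "src L b \<in> f ` Mor G" using e by simp
    hence b: "b \<in> f ` Mor G" using S m Ob by blast
    then obtain gb where gb: "gb \<in> Mor G" "b = f gb" by blast
    have "rng L b = f (rng G gb)" using Mf gb by blast
    hence "src L a = f (rng G gb)" using m(3) by simp
    hence "src L a \<in> f ` Mor G" using ObGM gb by blast
    hence "a \<in> f ` Mor G" using S m Ob by blast
    with b show ?thesis by blast
  qed
  then obtain ga gb where ga: "ga \<in> Mor G" "a = f ga" and gb: "gb \<in> Mor G" "b = f gb" by blast
  have "src L a = f (src G ga)" "rng L b = f (rng G gb)" using Mf ga gb by blast+
  hence "f (src G ga) = f (rng G gb)" using m(3) by simp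
  hence sr: "src G ga = rng G gb" using I ObGM ga gb by (meson inj_onD)
  have "f (comp G ga gb) = comp L (f ga) (f gb)" using Mc ga gb sr by blast
  hence "f (comp G ga gb) = f \<gamma>" using ga gb e by simp
  hence "comp G ga gb = \<gamma>" using I CG ga gb sr g by (meson inj_onD)
  thus ?thesis using ga gb sr by blast
qed

lemma kg_lift:
  assumes K1: "is_kgraph L1" and K2: "is_kgraph L2" and KG: "is_kgraph G"
    and M1: "is_kgraph_morphism G L1 f1" and I1: "inj_on f1 (Mor G)"
    and M2: "is_kgraph_morphism G L2 f2" and I2: "inj_on f2 (Mor G)"
    and H: "(hereditary L1 (f1 ` Mor G) \<and> hereditary L2 (f2 ` Mor G)) \<or>
         (cohereditary L1 (f1 ` Mor G) \<and> cohereditary L2 (f2 ` Mor G))"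
    and m: "a \<in> Mor L1" "b \<in> Mor L2" and g: "\<gamma> \<in> Mor G"
    and e: "src L1 a = f1 \<gamma>" "rng L2 b = f2 \<gamma>"
  shows "(\<exists>\<delta>\<in>Mor G. b = f2 \<delta> \<and> rng G \<delta> = \<gamma>) \<or> (\<exists>\<delta>\<in>Mor G. a = f1 \<delta> \<and> src G \<delta> = \<gamma>)"
proof -
  have Ob1: "\<forall>\<mu>\<in>Mor L1. rng L1 \<mu> \<in> Obj L1 \<and> src L1 \<mu> \<in> Obj L1"
    using K1 unfolding is_kgraph_def by blast
  have Ob2: "\<forall>\<mu>\<in>Mor L2. rng L2 \<mu> \<in> Obj L2 \<and> src L2 \<mu> \<in> Obj L2"
    using K2 unfolding is_kgraph_def by blast
  have ObG: "\<forall>\<mu>\<in>Mor G. rng G \<mu> \<in> Obj G \<and> src G \<mu> \<in> Obj G"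
    using KG unfolding is_kgraph_def by blast
  have ObGM: "\<forall>\<mu>\<in>Mor G. rng G \<mu> \<in> Mor G \<and> src G \<mu> \<in> Mor G" using ObG unfolding Obj_def by blast
  have Mf1: "\<forall>\<gamma>\<in>Mor G. f1 \<gamma> \<in> Mor L1 \<and> rng L1 (f1 \<gamma>) = f1 (rng G \<gamma>) \<and> src L1 (f1 \<gamma>) = f1 (src G \<gamma>)"
    using M1 unfolding is_kgraph_morphism_def by blast
  have Mf2: "\<forall>\<gamma>\<in>Mor G. f2 \<gamma> \<in> Mor L2 \<and> rng L2 (f2 \<gamma>) = f2 (rng G \<gamma>) \<and> src L2 (f2 \<gamma>) = f2 (src G \<gamma>)"
    using M2 unfolding is_kgraph_morphism_def by blast
  show ?thesis
  proof (cases "hereditary L2 (f2 ` Mor G)")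
    case True
    hence S: "f2 ` Mor G = {l \<in> Mor L2. rng L2 l \<in> f2 ` Mor G \<inter> Obj L2}" unfolding hereditary_def .
    have "b \<in> f2 ` Mor G" using S m g e Ob2 by blast
    then obtain d where d: "d \<in> Mor G" "b = f2 d" by blast
    have "rng L2 (f2 d) = f2 (rng G d)" using Mf2 d by blast
    hence "f2 (rng G d) = f2 \<gamma>" using d e by simp
    hence "rng G d = \<gamma>" using I2 ObGM d g by (meson inj_onD)
    thus ?thesis using d by blast
  next
    case False
    hence S: "f1 ` Mor G = {l \<in> Mor L1. src L1 l \<in> f1 ` Mor G \<inter> Obj L1}" using H unfolding cohereditary_def by blast
    have "a \<in> f1 ` Mor G" using S m g e Ob1 by blast
    then obtain d where d: "d \<in> Mor G" "a = f1 d" by blast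
    have "src L1 (f1 d) = f1 (src G d)" using Mf1 d by blast
    hence "f1 (src G d) = f1 \<gamma>" using d e by simp
    hence "src G d = \<gamma>" using I1 ObGM d g by (meson inj_onD)
    thus ?thesis using d by blast
  qed
qed

lemma comp_lift:
  assumes KG: "is_kgraph G" and M: "is_kgraph_morphism G L f" and I: "inj_on f (Mor G)"
    and g: "\<gamma> \<in> Mor G" "\<delta> \<in> Mor G" and e: "src L (f \<gamma>) = rng L (f \<delta>)"
  shows "src G \<gamma> = rng G \<delta> \<and> comp L (f \<gamma>) (f \<delta>) = f (comp G \<gamma> \<delta>) \<and> comp G \<gamma> \<delta> \<in> Mor G"
proof -
  have ObG: "\<forall>\<mu>\<in>Mor G. rng G \<mu> \<in> Obj G \<and> src G \<mu> \<in> Obj G"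
   and CG: "\<forall>\<mu>\<in>Mor G. \<forall>\<nu>\<in>Mor G. src G \<mu> = rng G \<nu> \<longrightarrow>
        comp G \<mu> \<nu> \<in> Mor G \<and> rng G (comp G \<mu> \<nu>) = rng G \<mu> \<and>
        src G (comp G \<mu> \<nu>) = src G \<nu>"
    using KG unfolding is_kgraph_def by blast+
  have ObGM: "\<forall>\<mu>\<in>Mor G. rng G \<mu> \<in> Mor G \<and> src G \<mu> \<in> Mor G" using ObG unfolding Obj_def by blast
  have Mf: "\<forall>\<gamma>\<in>Mor G. f \<gamma> \<in> Mor L \<and> deg L (f \<gamma>) = deg G \<gamma> \<and>
        rng L (f \<gamma>) = f (rng G \<gamma>) \<and> src L (f \<gamma>) = f (src G \<gamma>)"
   and Mc: "\<forall>\<mu>\<in>Mor G. \<forall>\<nu>\<in>Mor G. src G \<mu> = rng G \<nu> \<longrightarrow>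
        f (comp G \<mu> \<nu>) = comp L (f \<mu>) (f \<nu>)"
    using M unfolding is_kgraph_morphism_def by blast+
  have "src L (f \<gamma>) = f (src G \<gamma>)" "rng L (f \<delta>) = f (rng G \<delta>)" using Mf g by blast+
  hence "f (src G \<gamma>) = f (rng G \<delta>)" using e by simp
  hence sr: "src G \<gamma> = rng G \<delta>" using I ObGM g by (meson inj_onD)
  show ?thesis using sr Mc CG g by metis
qed

theorem mainTheorem2:
  fixes L1 :: "('a, 'k::finite) kgraph" and L2 :: "('b, 'k) kgraph" and G :: "('c, 'k) kgraph"
    and f1 :: "'c \<Rightarrow> 'a" and f2 :: "'c \<Rightarrow> 'b"
  assumes "is_kgraph L1" and "is_kgraph L2" and "is_kgraph G"
    and "is_kgraph_morphism G L1 f1" and "inj_on f1 (Mor G)"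
    and "is_kgraph_morphism G L2 f2" and "inj_on f2 (Mor G)"
    and "(hereditary L1 (f1 ` Mor G) \<and> hereditary L2 (f2 ` Mor G)) \<or>
         (cohereditary L1 (f1 ` Mor G) \<and> cohereditary L2 (f2 ` Mor G))"
  defines "U \<equiv> kg_union L1 L2" and "E \<equiv> sim_phi L1 L2 G f1 f2"
  shows
    "(\<forall>\<mu> \<nu>. (\<mu>, \<nu>) \<in> E \<longrightarrow> deg U \<mu> = deg U \<nu>) \<and>
     (\<forall>\<alpha> \<alpha>' \<beta> \<beta>'. (\<alpha>, \<alpha>') \<in> E \<longrightarrow> (\<beta>, \<beta>') \<in> E \<longrightarrow>
        rng U \<beta> = src U \<alpha> \<longrightarrow> rng U \<beta>' = src U \<alpha>' \<longrightarrow>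
        (comp U \<alpha> \<beta>, comp U \<alpha>' \<beta>') \<in> E) \<and>
     (\<forall>\<alpha> \<alpha>' \<beta> \<beta>'. \<alpha> \<in> Mor U \<longrightarrow> \<alpha>' \<in> Mor U \<longrightarrow> \<beta> \<in> Mor U \<longrightarrow> \<beta>' \<in> Mor U \<longrightarrow>
        rng U \<beta> = src U \<alpha> \<longrightarrow> rng U \<beta>' = src U \<alpha>' \<longrightarrow>
        (comp U \<alpha> \<beta>, comp U \<alpha>' \<beta>') \<in> E \<longrightarrow> deg U \<alpha> = deg U \<alpha>' \<longrightarrow>
        (\<alpha>, \<alpha>') \<in> E \<and> (\<beta>, \<beta>') \<in> E) \<and>
     (\<forall>\<alpha> \<beta>. \<alpha> \<in> Mor U \<longrightarrow> \<beta> \<in> Mor U \<longrightarrow> (src U \<alpha>, rng U \<beta>) \<in> E \<longrightarrow>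
        (\<exists>\<alpha>' \<beta>'. (\<alpha>', \<alpha>) \<in> E \<and> (\<beta>', \<beta>) \<in> E \<and> src U \<alpha>' = rng U \<beta>'))"
proof -
  note K1 = assms(1) and K2 = assms(2) and KG = assms(3) and M1 = assms(4) and I1 = assms(5)
    and M2 = assms(6) and I2 = assms(7) and H = assms(8)
  have Mf1: "\<forall>\<gamma>\<in>Mor G. f1 \<gamma> \<in> Mor L1 \<and> deg L1 (f1 \<gamma>) = deg G \<gamma> \<and>
        rng L1 (f1 \<gamma>) = f1 (rng G \<gamma>) \<and> src L1 (f1 \<gamma>) = f1 (src G \<gamma>)"
    using M1 unfolding is_kgraph_morphism_def by blast
  have Mf2: "\<forall>\<gamma>\<in>Mor G. f2 \<gamma> \<in> Mor L2 \<and> deg L2 (f2 \<gamma>) = deg G \<gamma> \<and>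
        rng L2 (f2 \<gamma>) = f2 (rng G \<gamma>) \<and> src L2 (f2 \<gamma>) = f2 (src G \<gamma>)"
    using M2 unfolding is_kgraph_morphism_def by blast
  have C1: "\<forall>\<mu>\<in>Mor L1. \<forall>\<nu>\<in>Mor L1. src L1 \<mu> = rng L1 \<nu> \<longrightarrow> comp L1 \<mu> \<nu> \<in> Mor L1"
    using K1 unfolding is_kgraph_def by blast
  have C2: "\<forall>\<mu>\<in>Mor L2. \<forall>\<nu>\<in>Mor L2. src L2 \<mu> = rng L2 \<nu> \<longrightarrow> comp L2 \<mu> \<nu> \<in> Mor L2"
    using K2 unfolding is_kgraph_def by blast
  have MU: "Mor U = Inl ` Mor L1 \<union> Inr ` Mor L2" unfolding U_def kg_union_def by simp
  have rU: "rng U (Inl x) = Inl (rng L1 x)" "rng U (Inr y) = Inr (rng L2 y)" for x y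
    unfolding U_def kg_union_def by simp_all
  have sU: "src U (Inl x) = Inl (src L1 x)" "src U (Inr y) = Inr (src L2 y)" for x y
    unfolding U_def kg_union_def by simp_all
  have cU: "comp U (Inl x) (Inl x') = Inl (comp L1 x x')" "comp U (Inr y) (Inr y') = Inr (comp L2 y y')" for x x' y y'
    unfolding U_def kg_union_def by simp_all
  have dU: "deg U (Inl x) = deg L1 x" "deg U (Inr y) = deg L2 y" for x y
    unfolding U_def kg_union_def by simp_all
  have InU: "Inl (f1 \<gamma>) \<in> Mor U" "Inr (f2 \<gamma>) \<in> Mor U" if "\<gamma> \<in> Mor G" for \<gamma>
    using Mf1 Mf2 that unfolding MU by blast+
  define Q where "Q = {(x, y). (x \<in> Mor U \<and> y = x) \<or> (\<exists>\<gamma>\<in>Mor G. x = Inl (f1 \<gamma>) \<and> y = Inr (f2 \<gamma>))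
      \<or> (\<exists>\<gamma>\<in>Mor G. x = Inr (f2 \<gamma>) \<and> y = Inl (f1 \<gamma>))}"
  let ?R = "{(Inl (f1 \<gamma>), Inr (f2 \<gamma>)) | \<gamma>. \<gamma> \<in> Mor G}"
  have EQ: "E = Q"
  proof
    have "equiv (Mor U) Q"
    proof (rule equivI)
      show "Q \<subseteq> Mor U \<times> Mor U" unfolding Q_def MU using Mf1 Mf2 by blast
      show "refl_on (Mor U) Q" unfolding Q_def refl_on_def by blast
      show "sym Q" unfolding Q_def sym_def by blast
      show "trans Q" unfolding Q_def trans_def using I1 I2 InU by (auto dest: inj_onD)
    qed
    moreover have "?R \<subseteq> Q" unfolding Q_def by blast
    ultimately show "E \<subseteq> Q" unfolding E_def sim_phi_def equiv_closure_on_def U_def by blast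
  next
    show "Q \<subseteq> E"
    proof
      fix p assume p: "p \<in> Q"
      show "p \<in> E" unfolding E_def sim_phi_def equiv_closure_on_def U_def[symmetric]
      proof
        fix X assume "X \<in> {E. equiv (Mor U) E \<and> ?R \<subseteq> E}"
        hence X: "refl_on (Mor U) X" "sym X" "?R \<subseteq> X" unfolding equiv_def by blast+
        show "p \<in> X" using p X unfolding Q_def refl_on_def sym_def by blast
      qed
    qed
  qed
  have Echar: "(x, y) \<in> E \<longleftrightarrow> (x \<in> Mor U \<and> y = x) \<or> (\<exists>\<gamma>\<in>Mor G. x = Inl (f1 \<gamma>) \<and> y = Inr (f2 \<gamma>))
      \<or> (\<exists>\<gamma>\<in>Mor G. x = Inr (f2 \<gamma>) \<and> y = Inl (f1 \<gamma>))" for x y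
    unfolding EQ Q_def by simp
  have Ecomm: "(x, y) \<in> E \<Longrightarrow> (y, x) \<in> E" for x y unfolding Echar by blast
  have CU: "comp U \<alpha> \<beta> \<in> Mor U" if "\<alpha> \<in> Mor U" "\<beta> \<in> Mor U" "rng U \<beta> = src U \<alpha>" for \<alpha> \<beta>
    using that C1 C2 unfolding MU by (auto simp: rU sU cU)
  have P1: "\<forall>\<mu> \<nu>. (\<mu>, \<nu>) \<in> E \<longrightarrow> deg U \<mu> = deg U \<nu>"
    unfolding Echar using Mf1 Mf2 by (auto simp: dU)
  have P2: "\<forall>\<alpha> \<alpha>' \<beta> \<beta>'. (\<alpha>, \<alpha>') \<in> E \<longrightarrow> (\<beta>, \<beta>') \<in> E \<longrightarrow>
        rng U \<beta> = src U \<alpha> \<longrightarrow> rng U \<beta>' = src U \<alpha>' \<longrightarrow>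
        (comp U \<alpha> \<beta>, comp U \<alpha>' \<beta>') \<in> E"
  proof (intro allI impI)
    fix \<alpha> \<alpha>' \<beta> \<beta>'
    assume a: "(\<alpha>, \<alpha>') \<in> E" and b: "(\<beta>, \<beta>') \<in> E" and r1: "rng U \<beta> = src U \<alpha>"
      and r2: "rng U \<beta>' = src U \<alpha>'"
    from a consider (A1) "\<alpha> \<in> Mor U" "\<alpha>' = \<alpha>" | (A2) \<gamma> where "\<gamma> \<in> Mor G" "\<alpha> = Inl (f1 \<gamma>)" "\<alpha>' = Inr (f2 \<gamma>)"
      | (A3) \<gamma> where "\<gamma> \<in> Mor G" "\<alpha> = Inr (f2 \<gamma>)" "\<alpha>' = Inl (f1 \<gamma>)" unfolding Echar by blast
    then show "(comp U \<alpha> \<beta>, comp U \<alpha>' \<beta>') \<in> E"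
    proof cases
      case A1
      from b consider (B1) "\<beta> \<in> Mor U" "\<beta>' = \<beta>" | (B2) \<delta> where "\<delta> \<in> Mor G" "\<beta> = Inl (f1 \<delta>)" "\<beta>' = Inr (f2 \<delta>)"
        | (B3) \<delta> where "\<delta> \<in> Mor G" "\<beta> = Inr (f2 \<delta>)" "\<beta>' = Inl (f1 \<delta>)" unfolding Echar by blast
      then show ?thesis
      proof cases
        case B1 then show ?thesis using A1 CU r1 unfolding Echar by simp
      next
        case B2 then show ?thesis using A1 r1 r2 unfolding MU by (auto simp: rU sU)
      next
        case B3 then show ?thesis using A1 r1 r2 unfolding MU by (auto simp: rU sU)
      qed
    next
      case A2
      from b consider (B1) "\<beta> \<in> Mor U" "\<beta>' = \<beta>" | (B2) \<delta> where "\<delta> \<in> Mor G" "\<beta> = Inl (f1 \<delta>)" "\<beta>' = Inr (f2 \<delta>)"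
        | (B3) \<delta> where "\<delta> \<in> Mor G" "\<beta> = Inr (f2 \<delta>)" "\<beta>' = Inl (f1 \<delta>)" unfolding Echar by blast
      then show ?thesis
      proof cases
        case B1 then show ?thesis using A2 r1 r2 unfolding MU by (auto simp: rU sU)
      next
        case B2
        have "src L1 (f1 \<gamma>) = rng L1 (f1 \<delta>)" using r1 A2 B2 by (simp add: rU sU)
        from comp_lift[OF KG M1 I1 A2(1) B2(1) this]
        have x: "src G \<gamma> = rng G \<delta>" "comp L1 (f1 \<gamma>) (f1 \<delta>) = f1 (comp G \<gamma> \<delta>)" "comp G \<gamma> \<delta> \<in> Mor G" by auto
        from comp_lift[OF KG M2 I2 A2(1) B2(1)] x Mf2 A2 B2
        have "comp L2 (f2 \<gamma>) (f2 \<delta>) = f2 (comp G \<gamma> \<delta>)" by metis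
        then show ?thesis using x A2 B2 unfolding Echar by (auto simp: cU)
      next
        case B3 then show ?thesis using A2 r1 r2 unfolding MU by (auto simp: rU sU)
      qed
    next
      case A3
      from b consider (B1) "\<beta> \<in> Mor U" "\<beta>' = \<beta>" | (B2) \<delta> where "\<delta> \<in> Mor G" "\<beta> = Inl (f1 \<delta>)" "\<beta>' = Inr (f2 \<delta>)"
        | (B3) \<delta> where "\<delta> \<in> Mor G" "\<beta> = Inr (f2 \<delta>)" "\<beta>' = Inl (f1 \<delta>)" unfolding Echar by blast
      then show ?thesis
      proof cases
        case B1 then show ?thesis using A3 r1 r2 unfolding MU by (auto simp: rU sU)
      next
        case B3
        have "src L2 (f2 \<gamma>) = rng L2 (f2 \<delta>)" using r1 A3 B3 by (simp add: rU sU)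
        from comp_lift[OF KG M2 I2 A3(1) B3(1) this]
        have x: "src G \<gamma> = rng G \<delta>" "comp L2 (f2 \<gamma>) (f2 \<delta>) = f2 (comp G \<gamma> \<delta>)" "comp G \<gamma> \<delta> \<in> Mor G" by auto
        from comp_lift[OF KG M1 I1 A3(1) B3(1)] x Mf1 A3 B3
        have "comp L1 (f1 \<gamma>) (f1 \<delta>) = f1 (comp G \<gamma> \<delta>)" by metis
        then show ?thesis using x A3 B3 unfolding Echar by (auto simp: cU)
      next
        case B2 then show ?thesis using A3 r1 r2 unfolding MU by (auto simp: rU sU)
      qed
    qed
  qed
  have Hd1: "hereditary L1 (f1 ` Mor G) \<or> cohereditary L1 (f1 ` Mor G)"
   and Hd2: "hereditary L2 (f2 ` Mor G) \<or> cohereditary L2 (f2 ` Mor G)" using H by blast+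
  have sides: "(\<exists>a b. \<alpha> = Inl a \<and> \<beta> = Inl b \<and> a \<in> Mor L1 \<and> b \<in> Mor L1 \<and> src L1 a = rng L1 b) \<or>
      (\<exists>a b. \<alpha> = Inr a \<and> \<beta> = Inr b \<and> a \<in> Mor L2 \<and> b \<in> Mor L2 \<and> src L2 a = rng L2 b)"
    if "\<alpha> \<in> Mor U" "\<beta> \<in> Mor U" "rng U \<beta> = src U \<alpha>" for \<alpha> \<beta>
    using that unfolding MU by (auto simp: rU sU)
  have core: "(\<alpha>, \<alpha>') \<in> E \<and> (\<beta>, \<beta>') \<in> E"
    if m: "\<alpha> \<in> Mor U" "\<alpha>' \<in> Mor U" "\<beta> \<in> Mor U" "\<beta>' \<in> Mor U"
      and r: "rng U \<beta> = src U \<alpha>" "rng U \<beta>' = src U \<alpha>'" and g: "\<gamma> \<in> Mor G"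
      and e: "comp U \<alpha> \<beta> = Inl (f1 \<gamma>)" "comp U \<alpha>' \<beta>' = Inr (f2 \<gamma>)"
      and d: "deg U \<alpha> = deg U \<alpha>'" for \<alpha> \<alpha>' \<beta> \<beta>' \<gamma>
  proof -
    obtain a b where ab: "\<alpha> = Inl a" "\<beta> = Inl b" "a \<in> Mor L1" "b \<in> Mor L1" "src L1 a = rng L1 b"
      using sides[OF m(1) m(3) r(1)] e(1) by (auto simp: cU)
    obtain a' b' where ab': "\<alpha>' = Inr a'" "\<beta>' = Inr b'" "a' \<in> Mor L2" "b' \<in> Mor L2" "src L2 a' = rng L2 b'"
      using sides[OF m(2) m(4) r(2)] e(2) by (auto simp: cU)
    have "comp L1 a b = f1 \<gamma>" using e ab by (simp add: cU)
    from kg_decomp[OF K1 KG M1 I1 Hd1 ab(3,4,5) g this]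
    obtain ga gb where G1: "ga \<in> Mor G" "gb \<in> Mor G" "a = f1 ga" "b = f1 gb" "src G ga = rng G gb" "\<gamma> = comp G ga gb" by blast
    have "comp L2 a' b' = f2 \<gamma>" using e ab' by (simp add: cU)
    from kg_decomp[OF K2 KG M2 I2 Hd2 ab'(3,4,5) g this]
    obtain ga' gb' where G2: "ga' \<in> Mor G" "gb' \<in> Mor G" "a' = f2 ga'" "b' = f2 gb'" "src G ga' = rng G gb'" "\<gamma> = comp G ga' gb'" by blast
    have "deg G ga = deg G ga'" using d ab ab' G1 G2 Mf1 Mf2 by (metis dU)
    with kg_unique[OF KG G1(1,2) G2(1,2) G1(5) G2(5)] G1(6) G2(6)
    have "ga = ga'" "gb = gb'" by auto
    then show ?thesis unfolding Echar using ab ab' G1 G2 by blast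
  qed
  have P3: "\<forall>\<alpha> \<alpha>' \<beta> \<beta>'. \<alpha> \<in> Mor U \<longrightarrow> \<alpha>' \<in> Mor U \<longrightarrow> \<beta> \<in> Mor U \<longrightarrow> \<beta>' \<in> Mor U \<longrightarrow>
        rng U \<beta> = src U \<alpha> \<longrightarrow> rng U \<beta>' = src U \<alpha>' \<longrightarrow>
        (comp U \<alpha> \<beta>, comp U \<alpha>' \<beta>') \<in> E \<longrightarrow> deg U \<alpha> = deg U \<alpha>' \<longrightarrow>
        (\<alpha>, \<alpha>') \<in> E \<and> (\<beta>, \<beta>') \<in> E"
  proof (intro allI impI)
    fix \<alpha> \<alpha>' \<beta> \<beta>'
    assume m: "\<alpha> \<in> Mor U" "\<alpha>' \<in> Mor U" "\<beta> \<in> Mor U" "\<beta>' \<in> Mor U"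
      and r: "rng U \<beta> = src U \<alpha>" "rng U \<beta>' = src U \<alpha>'"
      and e: "(comp U \<alpha> \<beta>, comp U \<alpha>' \<beta>') \<in> E" and d: "deg U \<alpha> = deg U \<alpha>'"
    from e consider (E1) "comp U \<alpha>' \<beta>' = comp U \<alpha> \<beta>"
      | (E2) \<gamma> where "\<gamma> \<in> Mor G" "comp U \<alpha> \<beta> = Inl (f1 \<gamma>)" "comp U \<alpha>' \<beta>' = Inr (f2 \<gamma>)"
      | (E3) \<gamma> where "\<gamma> \<in> Mor G" "comp U \<alpha> \<beta> = Inr (f2 \<gamma>)" "comp U \<alpha>' \<beta>' = Inl (f1 \<gamma>)"
      unfolding Echar by blast
    then show "(\<alpha>, \<alpha>') \<in> E \<and> (\<beta>, \<beta>') \<in> E"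
    proof cases
      case E1
      have "\<alpha> = \<alpha>' \<and> \<beta> = \<beta>'"
      proof -
        from sides[OF m(1) m(3) r(1)] sides[OF m(2) m(4) r(2)] show ?thesis
        proof (elim disjE exE conjE)
          fix a b a' b' assume x: "\<alpha> = Inl a" "\<beta> = Inl b" "a \<in> Mor L1" "b \<in> Mor L1" "src L1 a = rng L1 b"
            "\<alpha>' = Inl a'" "\<beta>' = Inl b'" "a' \<in> Mor L1" "b' \<in> Mor L1" "src L1 a' = rng L1 b'"
          have "comp L1 a b = comp L1 a' b'" "deg L1 a = deg L1 a'" using E1 d x by (simp_all add: cU dU)
          from kg_unique[OF K1 x(3,4,8,9,5,10) this] show ?thesis using x by simp
        next
          fix a b a' b' assume x: "\<alpha> = Inr a" "\<beta> = Inr b" "a \<in> Mor L2" "b \<in> Mor L2" "src L2 a = rng L2 b"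
            "\<alpha>' = Inr a'" "\<beta>' = Inr b'" "a' \<in> Mor L2" "b' \<in> Mor L2" "src L2 a' = rng L2 b'"
          have "comp L2 a b = comp L2 a' b'" "deg L2 a = deg L2 a'" using E1 d x by (simp_all add: cU dU)
          from kg_unique[OF K2 x(3,4,8,9,5,10) this] show ?thesis using x by simp
        next
          fix a b a' b' assume x: "\<alpha> = Inl a" "\<beta> = Inl b" "\<alpha>' = Inr a'" "\<beta>' = Inr b'"
          show ?thesis using E1 x by (simp add: cU)
        next
          fix a b a' b' assume x: "\<alpha> = Inr a" "\<beta> = Inr b" "\<alpha>' = Inl a'" "\<beta>' = Inl b'"
          show ?thesis using E1 x by (simp add: cU)
        qed
      qed
      then show ?thesis using m unfolding Echar by blast
    next
      case E2 then show ?thesis using core[OF m r E2(1) E2(2,3) d] by blast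
    next
      case E3
      have "(\<alpha>', \<alpha>) \<in> E \<and> (\<beta>', \<beta>) \<in> E" using core[OF m(2,1,4,3) r(2,1) E3(1) E3(3,2)] d by simp
      then show ?thesis using Ecomm by blast
    qed
  qed
  have H': "(hereditary L2 (f2 ` Mor G) \<and> hereditary L1 (f1 ` Mor G)) \<or>
         (cohereditary L2 (f2 ` Mor G) \<and> cohereditary L1 (f1 ` Mor G))" using H by blast
  have P4: "\<forall>\<alpha> \<beta>. \<alpha> \<in> Mor U \<longrightarrow> \<beta> \<in> Mor U \<longrightarrow> (src U \<alpha>, rng U \<beta>) \<in> E \<longrightarrow>
        (\<exists>\<alpha>' \<beta>'. (\<alpha>', \<alpha>) \<in> E \<and> (\<beta>', \<beta>) \<in> E \<and> src U \<alpha>' = rng U \<beta>')"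
  proof (intro allI impI)
    fix \<alpha> \<beta> assume m: "\<alpha> \<in> Mor U" "\<beta> \<in> Mor U" and e: "(src U \<alpha>, rng U \<beta>) \<in> E"
    have ra: "(\<alpha>, \<alpha>) \<in> E" "(\<beta>, \<beta>) \<in> E" using m unfolding Echar by blast+
    from e consider (E1) "rng U \<beta> = src U \<alpha>"
      | (E2) \<gamma> where "\<gamma> \<in> Mor G" "src U \<alpha> = Inl (f1 \<gamma>)" "rng U \<beta> = Inr (f2 \<gamma>)"
      | (E3) \<gamma> where "\<gamma> \<in> Mor G" "src U \<alpha> = Inr (f2 \<gamma>)" "rng U \<beta> = Inl (f1 \<gamma>)"
      unfolding Echar by blast
    then show "\<exists>\<alpha>' \<beta>'. (\<alpha>', \<alpha>) \<in> E \<and> (\<beta>', \<beta>) \<in> E \<and> src U \<alpha>' = rng U \<beta>'"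
    proof cases
      case E1 then show ?thesis using ra by metis
    next
      case E2
      obtain a b where ab: "\<alpha> = Inl a" "\<beta> = Inr b" "a \<in> Mor L1" "b \<in> Mor L2"
        using m E2 unfolding MU by (auto simp: rU sU)
      have "src L1 a = f1 \<gamma>" "rng L2 b = f2 \<gamma>" using E2 ab by (simp_all add: rU sU)
      from kg_lift[OF K1 K2 KG M1 I1 M2 I2 H ab(3,4) E2(1) this]
      show ?thesis
      proof (elim disjE bexE conjE)
        fix \<delta> assume x: "\<delta> \<in> Mor G" "b = f2 \<delta>" "rng G \<delta> = \<gamma>"
        have "rng U (Inl (f1 \<delta>)) = Inl (f1 \<gamma>)" using Mf1 x by (simp add: rU)
        moreover have "(Inl (f1 \<delta>), \<beta>) \<in> E" using x ab unfolding Echar by blast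
        ultimately show ?thesis using ra E2 by metis
      next
        fix \<delta> assume x: "\<delta> \<in> Mor G" "a = f1 \<delta>" "src G \<delta> = \<gamma>"
        have "src U (Inr (f2 \<delta>)) = Inr (f2 \<gamma>)" using Mf2 x by (simp add: sU)
        moreover have "(Inr (f2 \<delta>), \<alpha>) \<in> E" using x ab unfolding Echar by blast
        ultimately show ?thesis using ra E2 by metis
      qed
    next
      case E3
      obtain a b where ab: "\<alpha> = Inr a" "\<beta> = Inl b" "a \<in> Mor L2" "b \<in> Mor L1"
        using m E3 unfolding MU by (auto simp: rU sU)
      have "src L2 a = f2 \<gamma>" "rng L1 b = f1 \<gamma>" using E3 ab by (simp_all add: rU sU)
      from kg_lift[OF K2 K1 KG M2 I2 M1 I1 H' ab(3,4) E3(1) this]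
      show ?thesis
      proof (elim disjE bexE conjE)
        fix \<delta> assume x: "\<delta> \<in> Mor G" "b = f1 \<delta>" "rng G \<delta> = \<gamma>"
        have "rng U (Inr (f2 \<delta>)) = Inr (f2 \<gamma>)" using Mf2 x by (simp add: rU)
        moreover have "(Inr (f2 \<delta>), \<beta>) \<in> E" using x ab unfolding Echar by blast
        ultimately show ?thesis using ra E3 by metis
      next
        fix \<delta> assume x: "\<delta> \<in> Mor G" "a = f2 \<delta>" "src G \<delta> = \<gamma>"
        have "src U (Inl (f1 \<delta>)) = Inl (f1 \<gamma>)" using Mf1 x by (simp add: sU)
        moreover have "(Inl (f1 \<delta>), \<alpha>) \<in> E" using x ab unfolding Echar by blast
        ultimately show ?thesis using ra E3 by metis
      qed
    qed
  qed
  show ?thesis using P1 P2 P3 P4 by blast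
qed

end
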